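(* Let $m>1$, $D>0$ and $r\ge 0$, and let $b,d$ satisfy the standing assumptions below. Then there exists a constant $\dot c=\dot c(m,r,b,d)>0$, depending on $m$, $r$ and the structure of $b(\cdot),d(\cdot)$, such that for every $c\in(0,\dot c)$ the wave profile equation $$c\phi'(t)=D(\phi^m)''(t)-d(\phi(t))+b(\phi(t-cr)),\qquad t\in\mathbb R,$$ admits no wave solution (neither semi-wavefront nor wavefront, neither sharp nor smooth). Moreover, $$\dot c(m,r,b,d)=\frac{\mu_0(m,b(\cdot),d(\cdot))+o(1)}{r},\qquad r\to+\infty,$$ for some constant $\mu_0(m,b(\cdot),d(\cdot))>0$ not depending on $r$.
   Context: Standing assumptions: the death rate $d\in C^2([0,+\infty))$ satisfies $d(0)=0$, $d'(s)>0$ and $d''(s)\ge0$ for $s>0$. The birth rate $b\in C^1([0,+\infty);[0,+\infty))$ has exactly one positive local extremum point $s_M$, which is its global maximum point; $b(0)=0$; there is $\kappa>0$ with $b(\kappa)=d(\kappa)$; $b'(0)>d'(0)$; $b'(\kappa)<d'(\kappa)$; and $d(s)<b(s)\le b'(0)s$ for $s\in(0,\kappa)$. Moreover $s_M<\kappa$. Definitions: a function $0\le\phi\in W^{1,1}_{\rm loc}(\mathbb R)\cap L^\infty(\mathbb R)$ with $\phi^m\in W^{1,1}_{\rm loc}(\mathbb R)$ is a semi-wavefront (of speed $c>0$) if (i) it satisfies the wave profile equation in the sense of distributions; (ii) $\phi(-\infty)=0$ and $0<\liminf_{t\to+\infty}\phi(t)\le\limsup_{t\to+\infty}\phi(t)<+\infty$;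 (iii) there is a maximal interval $(-\infty,t_0)$, $t_0\in(-\infty,+\infty]$, on which $\phi$ is monotonically increasing, and if $t_0<+\infty$ then $\phi(t_0)>\kappa$. A wavefront is a semi-wavefront with $\phi(+\infty)=\kappa$. A wave solution means a semi-wavefront or wavefront. It is sharp if there is $t_*\in\mathbb R$ with $\phi(t)=0$ for $t\le t_*$ and $\phi(t)>0$ for $t>t_*$, and smooth if $\phi(t)>0$ for all $t$. *)

theory Defs
  imports "HOL-Analysis.Analysis"
begin

definition death_rate_assms ::
  "(real \<Rightarrow> real) \<Rightarrow> (real \<Rightarrow> real) \<Rightarrow> (real \<Rightarrow> real) \<Rightarrow> bool" where
  "death_rate_assms d d1 d2 \<longleftrightarrow>
     (\<forall>s\<ge>0. (d has_real_derivative d1 s) (at s within {0..})) \<and>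
     (\<forall>s\<ge>0. (d1 has_real_derivative d2 s) (at s within {0..})) \<and>
     continuous_on {0..} d2 \<and>
     d 0 = 0 \<and> (\<forall>s>0. d1 s > 0) \<and> (\<forall>s>0. d2 s \<ge> 0)"

definition loc_max_at :: "(real \<Rightarrow> real) \<Rightarrow> real \<Rightarrow> bool" where
  "loc_max_at f x \<longleftrightarrow> (\<exists>\<delta>>0. \<forall>y. \<bar>y - x\<bar> < \<delta> \<longrightarrow> f y \<le> f x)"

definition loc_min_at :: "(real \<Rightarrow> real) \<Rightarrow> real \<Rightarrow> bool" where
  "loc_min_at f x \<longleftrightarrow> (\<exists>\<delta>>0. \<forall>y. \<bar>y - x\<bar> < \<delta> \<longrightarrow> f x \<le> f y)"

definition birth_rate_assms ::
  "(real \<Rightarrow> real) \<Rightarrow> (real \<Rightarrow> real) \<Rightarrow> (real \<Rightarrow> real) \<Rightarrow> (real \<Rightarrow> real)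
     \<Rightarrow> real \<Rightarrow> real \<Rightarrow> bool" where
  "birth_rate_assms b b1 d d1 \<kappa> sM \<longleftrightarrow>
     (\<forall>s\<ge>0. (b has_real_derivative b1 s) (at s within {0..})) \<and>
     continuous_on {0..} b1 \<and>
     (\<forall>s\<ge>0. b s \<ge> 0) \<and>
     sM > 0 \<and> (loc_max_at b sM \<or> loc_min_at b sM) \<and>
     (\<forall>x>0. (loc_max_at b x \<or> loc_min_at b x) \<longrightarrow> x = sM) \<and>
     (\<forall>s\<ge>0. b s \<le> b sM) \<and>
     b 0 = 0 \<and> \<kappa> > 0 \<and> b \<kappa> = d \<kappa> \<and>
     b1 0 > d1 0 \<and> b1 \<kappa> < d1 \<kappa> \<and>
     (\<forall>s. 0 < s \<and> s < \<kappa> \<longrightarrow> d s < b s \<and> b s \<le> b1 0 * s) \<and>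
     sM < \<kappa>"

definition test_fun :: "(real \<Rightarrow> real) \<Rightarrow> bool" where
  "test_fun \<psi> \<longleftrightarrow> (\<forall>k x. ((deriv ^^ k) \<psi>) differentiable (at x)) \<and>
                    (\<exists>a b. \<forall>x. x \<notin> {a..b} \<longrightarrow> \<psi> x = 0)"

definition loc_integrable :: "(real \<Rightarrow> real) \<Rightarrow> bool" where
  "loc_integrable f \<longleftrightarrow> (\<forall>a b. set_integrable lborel {a..b} f)"

definition W11_loc :: "(real \<Rightarrow> real) \<Rightarrow> bool" where
  "W11_loc f \<longleftrightarrow> loc_integrable f \<and>
     (\<exists>g. loc_integrable g \<and>
        (\<forall>\<psi>. test_fun \<psi> \<longrightarrow>
           (\<integral>t. f t * deriv \<psi> t \<partial>lborel) = - (\<integral>t. g t * \<psi> t \<partial>lborel)))"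

definition wave_eq_distr ::
  "real \<Rightarrow> real \<Rightarrow> (real \<Rightarrow> real) \<Rightarrow> (real \<Rightarrow> real) \<Rightarrow> real \<Rightarrow> real
     \<Rightarrow> (real \<Rightarrow> real) \<Rightarrow> bool" where
  "wave_eq_distr m D b d c r \<phi> \<longleftrightarrow>
     (\<forall>\<psi>. test_fun \<psi> \<longrightarrow>
        (\<integral>t. - c * \<phi> t * deriv \<psi> t \<partial>lborel) =
        (\<integral>t. D * (\<phi> t powr m) * deriv (deriv \<psi>) t - d (\<phi> t) * \<psi> t
               + b (\<phi> (t - c * r)) * \<psi> t \<partial>lborel))"

text \<open>phi is identified with its continuous representative (phi is in W^{1,1}_loc).\<close>
definition semi_wavefront ::
  "real \<Rightarrow> real \<Rightarrow> (real \<Rightarrow> real) \<Rightarrow> (real \<Rightarrow> real) \<Rightarrow> real \<Rightarrow> real \<Rightarrow> real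
     \<Rightarrow> (real \<Rightarrow> real) \<Rightarrow> bool" where
  "semi_wavefront m D b d \<kappa> c r \<phi> \<longleftrightarrow>
     c > 0 \<and>
     continuous_on UNIV \<phi> \<and> (\<forall>t. 0 \<le> \<phi> t) \<and> bounded (range \<phi>) \<and>
     W11_loc \<phi> \<and> W11_loc (\<lambda>t. \<phi> t powr m) \<and>
     wave_eq_distr m D b d c r \<phi> \<and>
     (\<phi> \<longlongrightarrow> 0) at_bot \<and>
     (\<exists>\<epsilon>>0. \<forall>\<^sub>F t in at_top. \<epsilon> \<le> \<phi> t) \<and>
     (\<exists>M. \<forall>\<^sub>F t in at_top. \<phi> t \<le> M) \<and>
     (\<exists>t0::ereal. t0 \<noteq> -\<infinity> \<and>
        mono_on {t. ereal t < t0} \<phi> \<and>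
        (\<forall>t1::ereal. t0 < t1 \<longrightarrow> \<not> mono_on {t. ereal t < t1} \<phi>) \<and>
        (t0 \<noteq> \<infinity> \<longrightarrow> \<phi> (real_of_ereal t0) > \<kappa>))"

definition wavefront ::
  "real \<Rightarrow> real \<Rightarrow> (real \<Rightarrow> real) \<Rightarrow> (real \<Rightarrow> real) \<Rightarrow> real \<Rightarrow> real \<Rightarrow> real
     \<Rightarrow> (real \<Rightarrow> real) \<Rightarrow> bool" where
  "wavefront m D b d \<kappa> c r \<phi> \<longleftrightarrow>
     semi_wavefront m D b d \<kappa> c r \<phi> \<and> (\<phi> \<longlongrightarrow> \<kappa>) at_top"

definition wave_solution ::
  "real \<Rightarrow> real \<Rightarrow> (real \<Rightarrow> real) \<Rightarrow> (real \<Rightarrow> real) \<Rightarrow> real \<Rightarrow> real \<Rightarrow> real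
     \<Rightarrow> (real \<Rightarrow> real) \<Rightarrow> bool" where
  "wave_solution m D b d \<kappa> c r \<phi> \<longleftrightarrow>
     semi_wavefront m D b d \<kappa> c r \<phi> \<or> wavefront m D b d \<kappa> c r \<phi>"

end

theory Submission
  imports Defs
begin
fun Ck :: "nat \<Rightarrow> (real \<Rightarrow> real) \<Rightarrow> bool" where
  "Ck 0 f = True"
| "Ck (Suc n) f = (\<exists>f'. (\<forall>x. (f has_real_derivative f' x) (at x)) \<and> Ck n f')"

lemma CkI: "(\<forall>x. (f has_real_derivative f' x) (at x)) \<Longrightarrow> Ck n f' \<Longrightarrow> Ck (Suc n) f"
  by auto

definition smooth :: "(real \<Rightarrow> real) \<Rightarrow> bool" where
  "smooth f \<longleftrightarrow> (\<forall>n. Ck n f)"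

lemma Ck_Suc_mono: "Ck (Suc n) f \<Longrightarrow> Ck n f"
proof (induction n arbitrary: f)
  case 0 then show ?case by simp
next
  case (Suc n)
  then obtain f' where "\<forall>x. (f has_real_derivative f' x) (at x)" "Ck (Suc n) f'" by auto
  with Suc.IH[of f'] show ?case by auto
qed

lemma Ck_add: "Ck n f \<Longrightarrow> Ck n g \<Longrightarrow> Ck n (\<lambda>x. f x + g x)"
proof (induction n arbitrary: f g)
  case 0 then show ?case by simp
next
  case (Suc n)
  from Suc.prems obtain f' g' where "\<forall>x. (f has_real_derivative f' x) (at x)" "Ck n f'"
    "\<forall>x. (g has_real_derivative g' x) (at x)" "Ck n g'" by auto
  then show ?case using Suc.IH[of f' g'] by (auto intro!: exI[of _ "\<lambda>x. f' x + g' x"] derivative_intros)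
qed

lemma Ck_const: "Ck n (\<lambda>x. c)"
  by (induction n arbitrary: c) (auto intro!: exI[of _ "\<lambda>x. 0"] derivative_intros)

lemma Ck_mult: "Ck n f \<Longrightarrow> Ck n g \<Longrightarrow> Ck n (\<lambda>x. f x * g x)"
proof (induction n arbitrary: f g)
  case 0 then show ?case by simp
next
  case (Suc n)
  from Suc.prems obtain f' g' where f': "\<forall>x. (f has_real_derivative f' x) (at x)" "Ck n f'"
    and g': "\<forall>x. (g has_real_derivative g' x) (at x)" "Ck n g'" by auto
  have "Ck n f" "Ck n g" using Suc.prems Ck_Suc_mono by auto
  then have "Ck n (\<lambda>x. f' x * g x + f x * g' x)"
    using Suc.IH f' g' by (intro Ck_add) auto
  moreover have "\<forall>x. ((\<lambda>x. f x * g x) has_real_derivative f' x * g x + f x * g' x) (at x)"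
    using f' g' by (auto intro!: derivative_eq_intros)
  ultimately show ?case by (intro CkI) auto
qed

lemma Ck_affine: "Ck n f \<Longrightarrow> Ck n (\<lambda>x. f (a * x + b))"
proof (induction n arbitrary: f)
  case 0 then show ?case by simp
next
  case (Suc n)
  from Suc.prems obtain f' where f': "\<forall>x. (f has_real_derivative f' x) (at x)" "Ck n f'" by auto
  have "Ck n (\<lambda>x. a * f' (a * x + b))"
    using Suc.IH[OF f'(2)] by (intro Ck_mult Ck_const)
  moreover have "((\<lambda>x. f (a * x + b)) has_real_derivative a * f' (a * x + b)) (at x)" for x
  proof -
    have d1: "(f has_real_derivative f' (a*x+b)) (at (a*x+b))" using f'(1) by auto
    have d2: "((\<lambda>x. a*x+b) has_real_derivative a) (at x)" by (auto intro!: derivative_eq_intros)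
    from DERIV_chain2[OF d1 d2] show ?thesis by (simp add: mult.commute)
  qed
  ultimately show ?case by (intro CkI) auto
qed

lemma Ck_deriv_differentiable:
  "Ck (Suc n) f \<Longrightarrow> ((deriv ^^ n) f) differentiable (at x)"
proof (induction n arbitrary: f)
  case 0 then show ?case by (auto simp: real_differentiable_def)
next
  case (Suc n)
  from Suc.prems obtain f' where f': "\<forall>x. (f has_real_derivative f' x) (at x)" "Ck (Suc n) f'" by auto
  have "deriv f = f'" using f'(1) by (auto intro!: ext DERIV_imp_deriv)
  have "(deriv ^^ Suc n) f = (deriv ^^ n) (deriv f)" by (simp only: funpow_Suc_right o_apply)
  with \<open>deriv f = f'\<close> have "(deriv ^^ Suc n) f = (deriv ^^ n) f'" by simp
  then show ?case using Suc.IH[OF f'(2)] by simp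
qed

lemma smooth_test_fun:
  assumes "smooth f" "\<And>x. x \<notin> {a..b} \<Longrightarrow> f x = 0"
  shows "test_fun f"
  using assms unfolding test_fun_def smooth_def by (auto intro!: Ck_deriv_differentiable)

definition fk :: "nat \<Rightarrow> real \<Rightarrow> real" where
  "fk k x = (if x > 0 then exp (- 1 / x) / x ^ k else 0)"

lemma ev_left: "eventually (\<lambda>y::real. y < x) (at_left x)"
  by (simp add: eventually_at_filter)

lemma fk_lim: "((fk k) \<longlongrightarrow> 0) (at_right 0)"
proof -
  have "((\<lambda>y::real. y ^ k / exp y) \<longlongrightarrow> 0) at_top" using tendsto_power_div_exp_0 by blast
  from filterlim_compose[OF this filterlim_inverse_at_top_right]
  have "((\<lambda>x::real. inverse x ^ k / exp (inverse x)) \<longlongrightarrow> 0) (at_right 0)" by simp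
  moreover have "eventually (\<lambda>x. inverse x ^ k / exp (inverse x) = fk k x) (at_right (0::real))"
  proof (rule eventually_mono[OF eventually_at_right_less])
    fix x :: real assume "0 < x"
    then show "inverse x ^ k / exp (inverse x) = fk k x"
      by (simp add: fk_def exp_minus field_simps power_inverse)
  qed
  ultimately show ?thesis by (rule Lim_transform_eventually)
qed

lemma fk_deriv: "(fk k has_real_derivative (- real k * fk (Suc k) x + fk (Suc (Suc k)) x)) (at x)"
proof (cases "x > 0")
  case True
  have "((\<lambda>x. exp (- 1 / x) / x ^ k) has_real_derivative (- real k * fk (Suc k) x + fk (Suc (Suc k)) x)) (at x)"
    using True
    apply (auto intro!: derivative_eq_intros simp: fk_def)
    apply (simp add: field_simps power2_eq_square)
    apply (cases k) apply auto
    done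
  then show ?thesis
    apply (rule has_field_derivative_transform_within_open[where S="{0<..}"])
    using True by (auto simp: fk_def)
next
  case False
  show ?thesis
  proof (cases "x < 0")
    case True
    have "((\<lambda>x. 0) has_real_derivative 0) (at x)" by simp
    then have "(fk k has_real_derivative 0) (at x)"
      apply (rule has_field_derivative_transform_within_open[where S="{..<0}"])
      using True by (auto simp: fk_def)
    then show ?thesis using True by (simp add: fk_def)
  next
    case False
    then have x0: "x = 0" using \<open>\<not> x > 0\<close> by simp
    have "((\<lambda>y. (fk k y - fk k 0) / (y - 0)) \<longlongrightarrow> 0) (at 0)"
      unfolding filterlim_at_split
    proof
      show "((\<lambda>y. (fk k y - fk k 0) / (y - 0)) \<longlongrightarrow> 0) (at_left 0)"
        by (rule Lim_transform_eventually[where f="\<lambda>_. 0"]) (auto simp: fk_def intro!: eventually_mono[OF ev_left])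
      show "((\<lambda>y. (fk k y - fk k 0) / (y - 0)) \<longlongrightarrow> 0) (at_right 0)"
      proof (rule Lim_transform_eventually[OF fk_lim[of "Suc k"]])
        show "\<forall>\<^sub>F y in at_right 0. fk (Suc k) y = (fk k y - fk k 0) / (y - 0)"
          by (rule eventually_mono[OF eventually_at_right_less]) (auto simp: fk_def field_simps)
      qed
    qed
    then show ?thesis using x0 by (simp add: has_field_derivative_iff fk_def)
  qed
qed

lemma Ck_fk: "Ck n (fk k)"
proof (induction n arbitrary: k)
  case 0 then show ?case by simp
next
  case (Suc n)
  have "Ck n (\<lambda>x. - real k * fk (Suc k) x + fk (Suc (Suc k)) x)"
    using Suc.IH by (intro Ck_add Ck_mult Ck_const)
  then show ?case using fk_deriv by (intro CkI) auto
qed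

definition rho :: "real \<Rightarrow> real" where
  "rho x = fk 0 (1 + x) * fk 0 (1 - x)"

lemma smooth_rho: "smooth rho"
  unfolding smooth_def rho_def
proof
  fix n
  have "Ck n (\<lambda>x. fk 0 (1 * x + 1))" "Ck n (\<lambda>x. fk 0 ((-1) * x + 1))"
    by (rule Ck_affine[OF Ck_fk])+
  then show "Ck n (\<lambda>x. fk 0 (1 + x) * fk 0 (1 - x))"
    using Ck_mult by (simp add: add.commute)
qed

lemma rho_supp: "x \<notin> {-1<..<1} \<Longrightarrow> rho x = 0"
  by (auto simp: rho_def fk_def)

lemma rho_nonneg: "rho x \<ge> 0"
  by (auto simp: rho_def fk_def)

lemma rho_pos0: "rho 0 > 0"
  by (auto simp: rho_def fk_def)

lemma sd_le0:
  fixes E :: "real \<Rightarrow> real"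
  assumes cont: "continuous_on UNIV E"
    and sd: "\<And>a h. h > 0 \<Longrightarrow> E a - 2 * E (a + h) + E (a + 2 * h) = 0"
    and pq: "p < q" "E p = 0" "E q = 0"
  shows "\<forall>x\<in>{p..q}. E x \<le> 0"
proof (rule ccontr)
  assume "\<not> ?thesis"
  then obtain x0 where x0: "x0 \<in> {p..q}" "E x0 > 0" by auto
  have cE: "continuous_on {p..q} E" using cont continuous_on_subset by blast
  obtain xm where xm: "xm \<in> {p..q}" "\<And>y. y \<in> {p..q} \<Longrightarrow> E y \<le> E xm"
    using continuous_attains_sup[OF compact_Icc _ cE] pq by fastforce
  define S where "S = {x \<in> {p..q}. E x = E xm}"
  have "closed S" unfolding S_def
    using continuous_closed_preimage_constant[OF cE closed_atLeastAtMost] by simp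
  then have "compact S" unfolding S_def by (simp add: compact_eq_bounded_closed) (auto intro: bounded_subset[of "{p..q}"])
  moreover have "S \<noteq> {}" using xm S_def by auto
  ultimately obtain z where z: "z \<in> S" "\<And>y. y \<in> S \<Longrightarrow> y \<le> z"
    using continuous_attains_sup[of S "\<lambda>x. x"] by (auto intro: continuous_intros)
  have Ez: "E z > 0" using z xm x0 S_def by force
  have zpq: "z \<in> {p..q}" using z(1) S_def by blast
  have "z \<noteq> p" using Ez pq(2) by auto
  moreover have "z \<noteq> q" using Ez pq(3) by auto
  ultimately have "p < z" "z < q" using zpq by auto
  define h where "h = min (z - p) (q - z)"
  have h: "h > 0" "z - h \<in> {p..q}" "z + h \<in> {p..q}" using \<open>p<z\<close> \<open>z<q\<close> by (auto simp: h_def)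
  have "E (z - h) - 2 * E (z - h + h) + E (z - h + 2 * h) = 0" using sd[OF h(1)] .
  then have eq: "E (z - h) + E (z + h) = 2 * E z" by (simp add: algebra_simps)
  have "E (z - h) \<le> E z" "E (z + h) \<le> E z" using xm h z S_def by auto
  then have "E (z + h) = E xm" using eq z S_def by auto
  then have "z + h \<in> S" using h S_def by auto
  then show False using z h by fastforce
qed

lemma sd_chord:
  fixes F :: "real \<Rightarrow> real"
  assumes cont: "continuous_on UNIV F"
    and sd: "\<And>a h. h > 0 \<Longrightarrow> F a - 2 * F (a + h) + F (a + 2 * h) = 0"
    and pq: "p < q" and x: "x \<in> {p..q}"
  shows "F x = F p + (F q - F p) * (x - p) / (q - p)"
proof -
  define k where "k = (F q - F p) / (q - p)"
  define E where "E y = F y - (F p + k * (y - p))" for y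
  have qp: "q - p \<noteq> 0" using pq by simp
  have cE: "continuous_on UNIV E" unfolding E_def using cont by (intro continuous_intros) auto
  have sdE: "E a - 2 * E (a + h) + E (a + 2 * h) = 0" if "h > 0" for a h
  proof -
    have "E a - 2 * E (a + h) + E (a + 2 * h) = F a - 2 * F (a + h) + F (a + 2 * h)"
      unfolding E_def by (simp add: algebra_simps)
    then show ?thesis using sd[OF that] by simp
  qed
  have "E p = 0" unfolding E_def by simp
  have "E q = 0" unfolding E_def k_def using qp by simp
  have "E x \<le> 0" using sd_le0[OF cE sdE pq \<open>E p = 0\<close> \<open>E q = 0\<close>] x by blast
  moreover have "- E x \<le> 0"
  proof -
    have c2: "continuous_on UNIV (\<lambda>y. - E y)" using cE by (intro continuous_intros)
    have "\<forall>y\<in>{p..q}. - E y \<le> 0"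
      by (rule sd_le0[OF c2]) (use sdE pq \<open>E p = 0\<close> \<open>E q = 0\<close> in \<open>auto simp: algebra_simps\<close>)
    then show ?thesis using x by blast
  qed
  ultimately have "E x = 0" by simp
  then show ?thesis unfolding E_def k_def by simp
qed

lemma sd_affine:
  fixes F :: "real \<Rightarrow> real"
  assumes cont: "continuous_on UNIV F"
    and sd: "\<And>a h. h > 0 \<Longrightarrow> F a - 2 * F (a + h) + F (a + 2 * h) = 0"
  shows "\<exists>\<alpha> \<beta>. \<forall>t. F t = \<alpha> * t + \<beta>"
proof (intro exI allI)
  fix t
  define L :: real where "L = \<bar>t\<bar> + 1"
  have L: "-L < L" "t \<in> {-L..L}" "1 \<in> {-L..L}" "-1 \<in> {-L..L}" unfolding L_def by auto
  have ch: "F x = F (-L) + (F L - F (-L)) * (x - (-L)) / (L - (-L))" if "x \<in> {-L..L}" for x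
    by (rule sd_chord[OF cont _ L(1) that]) (rule sd)
  have e1: "F 1 = F (-L) + (F L - F (-L)) * (1 + L) / (2 * L)" using ch[OF L(3)] by simp
  have e2: "F (-1) = F (-L) + (F L - F (-L)) * (-1 + L) / (2 * L)" using ch[OF L(4)] by simp
  have e3: "F t = F (-L) + (F L - F (-L)) * (t + L) / (2 * L)" using ch[OF L(2)] by simp
  have "L > 0" using L by simp
  show "F t = (F 1 - F (-1)) / 2 * t + (F 1 + F (-1)) / 2"
    unfolding e1 e2 e3 using \<open>L > 0\<close> by (simp add: field_simps)
qed

lemma AD: "continuous_on UNIV f \<Longrightarrow> \<exists>F. \<forall>x. (F has_real_derivative f x) (at x)"
proof -
  assume c: "continuous_on UNIV f"
  have "\<exists>F. \<forall>x :: real. -\<infinity> < x \<longrightarrow> x < \<infinity> \<longrightarrow> (F has_vector_derivative f x) (at x)"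
    by (rule einterval_antiderivative) (use c in \<open>auto simp: continuous_on_eq_continuous_at\<close>)
  then show ?thesis by (auto simp: has_real_derivative_iff_has_vector_derivative)
qed

lemma FTC:
  assumes "\<And>x. (F has_real_derivative f x) (at x)" "a \<le> b"
  shows "(f has_integral (F b - F a)) {a..b}"
  by (rule fundamental_theorem_of_calculus) 
     (use assms in \<open>auto simp: has_real_derivative_iff_has_vector_derivative intro: has_vector_derivative_at_within\<close>)

lemma int_shrink:
  fixes f :: "real \<Rightarrow> real"
  assumes c: "continuous_on UNIV f" and z: "\<And>t. t \<notin> {a..b} \<Longrightarrow> f t = 0" and sub: "{a..b} \<subseteq> {A..B}"
  shows "integral {A..B} f = integral {a..b} f"
proof -
  have "(f has_integral integral {a..b} f) {a..b}"
    using c by (intro integrable_integral integrable_continuous_interval) (auto intro: continuous_on_subset)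
  then have "((\<lambda>x. if x \<in> {a..b} then f x else 0) has_integral integral {a..b} f) UNIV"
    by (simp only: has_integral_restrict_UNIV)
  moreover have "(\<lambda>x. if x \<in> {a..b} then f x else 0) = (\<lambda>x. if x \<in> {A..B} then f x else 0)"
  proof
    fix x show "(if x \<in> {a..b} then f x else 0) = (if x \<in> {A..B} then f x else 0)"
      using z[of x] sub by (cases "x \<in> {a..b}"; cases "x \<in> {A..B}") auto
  qed
  ultimately have "(f has_integral integral {a..b} f) {A..B}"
    by (simp only: has_integral_restrict_UNIV)
  then show ?thesis by (rule integral_unique)
qed

lemma lborel_HK:
  fixes f :: "real \<Rightarrow> real"
  assumes c: "continuous_on UNIV f" and z: "\<And>t. t \<notin> {a..b} \<Longrightarrow> f t = 0"
  shows "(\<integral>t. f t \<partial>lborel) = integral {a..b} f"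
proof -
  have eq: "(\<lambda>x. indicator {a..b} x *\<^sub>R f x) = f"
  proof
    fix x show "indicator {a..b} x *\<^sub>R f x = f x" using z[of x] by (cases "x \<in> {a..b}") auto
  qed
  have "integrable lborel (\<lambda>x. indicator {a..b} x *\<^sub>R f x)"
    by (rule borel_integrable_compact) (use c in \<open>auto intro: continuous_on_subset\<close>)
  then have "integrable lborel f" using eq by simp
  then have "(f has_integral (\<integral>t. f t \<partial>lborel)) UNIV" by (rule has_integral_integral_lborel)
  moreover have "f = (\<lambda>x. if x \<in> {a..b} then f x else 0)"
  proof
    fix x show "f x = (if x \<in> {a..b} then f x else 0)" using z[of x] by (cases "x \<in> {a..b}") auto
  qed
  ultimately have "((\<lambda>x. if x \<in> {a..b} then f x else 0) has_integral (\<integral>t. f t \<partial>lborel)) UNIV"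
    by simp
  then have "(f has_integral (\<integral>t. f t \<partial>lborel)) {a..b}"
    by (simp only: has_integral_restrict_UNIV)
  then show ?thesis by (simp add: integral_unique)
qed

lemma deriv_const_on:
  fixes F :: "real \<Rightarrow> real"
  assumes "\<And>x. (F has_real_derivative f x) (at x)" "\<And>x. x \<in> {a..b} \<Longrightarrow> f x = 0" "a \<le> b"
  shows "F b = F a"
proof -
  have "(f has_integral (F b - F a)) {a..b}" by (rule FTC[OF assms(1,3)])
  moreover have "(f has_integral 0) {a..b}"
  proof -
    have "(f has_integral 0) {a..b} = ((\<lambda>x. 0::real) has_integral 0) {a..b}"
      by (rule has_integral_cong) (use assms(2) in auto)
    then show ?thesis using has_integral_0 by simp
  qed
  ultimately have "F b - F a = 0" by (rule has_integral_unique)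
  then show ?thesis by simp
qed

lemma Ck_cont: "Ck (Suc n) f \<Longrightarrow> continuous_on UNIV f"
proof -
  assume "Ck (Suc n) f"
  then obtain f' where "\<forall>x. (f has_real_derivative f' x) (at x)" by auto
  then show ?thesis by (meson DERIV_isCont continuous_at_imp_continuous_on)
qed

lemma cont_rho: "continuous_on UNIV rho"
  using smooth_rho Ck_cont unfolding smooth_def by blast

lemma nondec:
  fixes F :: "real \<Rightarrow> real"
  assumes "\<And>x. (F has_real_derivative f x) (at x)" "\<And>x. x \<in> {a..b} \<Longrightarrow> f x \<ge> 0" "a \<le> b"
  shows "F a \<le> F b"
  by (rule DERIV_nonneg_imp_nondecreasing[OF assms(3)]) (use assms(1,2) in auto)

lemma bump_prims:
  "\<exists>R R2 M. (\<forall>x. (R has_real_derivative rho x) (at x)) \<and> (\<forall>x. (R2 has_real_derivative R x) (at x)) \<and>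
     (\<forall>x. x \<le> -1 \<longrightarrow> R x = 0 \<and> R2 x = 0) \<and> (\<forall>x. x \<ge> 1 \<longrightarrow> R x = M \<and> R2 x = R2 1 + M * (x - 1)) \<and> M > 0"
proof -
  obtain R0 where R0: "\<And>x. (R0 has_real_derivative rho x) (at x)" using AD[OF cont_rho] by blast
  define R where "R x = R0 x - R0 (-1)" for x
  have dR: "\<And>x. (R has_real_derivative rho x) (at x)" unfolding R_def using R0 by (auto intro!: derivative_eq_intros)
  have contR: "continuous_on UNIV R" using dR by (auto intro!: continuous_at_imp_continuous_on DERIV_isCont)
  obtain R20 where R20: "\<And>x. (R20 has_real_derivative R x) (at x)" using AD[OF contR] by blast
  define R2 where "R2 x = R20 x - R20 (-1)" for x
  have dR2: "\<And>x. (R2 has_real_derivative R x) (at x)" unfolding R2_def using R20 by (auto intro!: derivative_eq_intros)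
  define M where "M = R 1"
  have Rl: "R x = 0" if "x \<le> -1" for x
  proof -
    have "R (-1) = R x" by (rule deriv_const_on[OF dR _ that]) (auto intro: rho_supp)
    then show ?thesis by (simp add: R_def)
  qed
  have Rr: "R x = M" if "x \<ge> 1" for x
    unfolding M_def by (rule deriv_const_on[OF dR _ that]) (auto intro: rho_supp)
  have R2l: "R2 x = 0" if "x \<le> -1" for x
  proof -
    have "R2 (-1) = R2 x" by (rule deriv_const_on[OF dR2 _ that]) (auto intro: Rl)
    then show ?thesis by (simp add: R2_def)
  qed
  have R2r: "R2 x = R2 1 + M * (x - 1)" if "x \<ge> 1" for x
  proof -
    have d: "\<And>y. ((\<lambda>y. R2 y - M * y) has_real_derivative R y - M) (at y)"
      using dR2 by (auto intro!: derivative_eq_intros)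
    have "R2 x - M * x = R2 1 - M * 1" by (rule deriv_const_on[OF d _ that]) (auto intro: Rr)
    then show ?thesis by (simp add: algebra_simps)
  qed
  have "M > 0"
  proof -
    have "isCont rho 0" using cont_rho by (simp add: continuous_on_eq_continuous_at)
    then obtain \<delta> where \<delta>: "\<delta> > 0" "\<And>y. dist y 0 < \<delta> \<Longrightarrow> dist (rho y) (rho 0) < rho 0 / 2"
      using rho_pos0 unfolding continuous_at_eps_delta by (metis half_gt_zero)
    define e where "e = min (\<delta>/2) (1/2)"
    have e: "e > 0" "e < \<delta>" "e \<le> 1/2" using \<delta> by (auto simp: e_def)
    have lo: "rho y \<ge> rho 0 / 2" if "y \<in> {-e..e}" for y
    proof -
      have "\<bar>y\<bar> < \<delta>" using that e by auto
      then have "\<bar>rho y - rho 0\<bar> < rho 0 / 2" using \<delta>(2)[of y] by (simp add: dist_real_def)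
      then show ?thesis by linarith
    qed
    have d: "\<And>y. ((\<lambda>y. R y - rho 0 / 2 * y) has_real_derivative rho y - rho 0 / 2) (at y)"
      using dR by (auto intro!: derivative_eq_intros)
    have "R (-e) - rho 0 / 2 * (-e) \<le> R e - rho 0 / 2 * e"
      by (rule nondec[OF d]) (use lo e in auto)
    moreover have "R (-1) \<le> R (-e)" by (rule nondec[OF dR]) (use e rho_nonneg in auto)
    moreover have "R e \<le> R 1" by (rule nondec[OF dR]) (use e rho_nonneg in auto)
    moreover have "rho 0 / 2 * e > 0" using rho_pos0 e by simp
    ultimately show ?thesis using Rl[of "-1"] unfolding M_def by linarith
  qed
  show ?thesis using dR dR2 Rl R2l Rr R2r \<open>M > 0\<close> by blast
qed

lemma Ck_shift: "Ck n f \<Longrightarrow> Ck n (\<lambda>x. f ((x - a) / e))"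
proof -
  assume "Ck n f"
  from Ck_affine[OF this, of "inverse e" "- (a / e)"]
  have "Ck n (\<lambda>x. f (inverse e * x + - (a / e)))" .
  moreover have "\<And>x. inverse e * x + - (a / e) = (x - a) / e"
    by (simp add: divide_inverse algebra_simps)
  ultimately show ?thesis by simp
qed

lemma scale_deriv:
  assumes "\<And>y. (G has_real_derivative g y) (at y)" "e \<noteq> 0"
  shows "((\<lambda>t. G ((t - x) / e)) has_real_derivative g ((t - x) / e) / e) (at t)"
proof -
  have d2: "((\<lambda>t. (t - x) / e) has_real_derivative 1 / e) (at t)" using assms(2) by (auto intro!: derivative_eq_intros)
  from DERIV_chain2[OF assms(1) d2] show ?thesis by simp
qed

lemma J_bound:
  fixes F :: "real \<Rightarrow> real"
  assumes cF: "continuous_on UNIV F" and e: "e > 0"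
    and dR: "\<And>x. (R has_real_derivative rho x) (at x)"
    and R1: "R 1 = M" and Rm1: "R (-1) = 0"
    and close: "\<And>t. t \<in> {x-e..x+e} \<Longrightarrow> \<bar>F t - F x\<bar> \<le> \<eta>"
  shows "\<bar>integral {x-e..x+e} (\<lambda>t. F t * (rho ((t - x) / e) / e)) - M * F x\<bar> \<le> M * \<eta>"
proof -
  define b where "b t = rho ((t - x) / e) / e" for t
  have cb: "continuous_on UNIV b" unfolding b_def
    by (intro continuous_intros continuous_on_compose2[OF cont_rho]) (use e in auto)
  have db: "((\<lambda>t. R ((t - x) / e)) has_real_derivative b t) (at t)" for t
    unfolding b_def by (rule scale_deriv[OF dR]) (use e in auto)
  have ib: "(b has_integral M) {x-e..x+e}"
    using FTC[of "\<lambda>t. R ((t - x) / e)" b "x - e" "x + e", OF db] e R1 Rm1 by simp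
  have iFb: "((\<lambda>t. F t * b t) has_integral integral {x-e..x+e} (\<lambda>t. F t * b t)) {x-e..x+e}"
    by (intro integrable_integral integrable_continuous_interval continuous_intros continuous_on_subset[OF cF] continuous_on_subset[OF cb]) auto
  have "((\<lambda>t. F t * b t - F x * b t) has_integral (integral {x-e..x+e} (\<lambda>t. F t * b t) - F x * M)) {x-e..x+e}"
    by (intro has_integral_diff iFb has_integral_mult_right ib)
  then have i1: "((\<lambda>t. (F t - F x) * b t) has_integral (integral {x-e..x+e} (\<lambda>t. F t * b t) - M * F x)) {x-e..x+e}"
    by (simp add: algebra_simps)
  have i2: "((\<lambda>t. \<eta> * b t) has_integral \<eta> * M) {x-e..x+e}"
    by (intro has_integral_mult_right ib)
  have "norm (integral {x-e..x+e} (\<lambda>t. (F t - F x) * b t)) \<le> integral {x-e..x+e} (\<lambda>t. \<eta> * b t)"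
  proof (rule integral_norm_bound_integral)
    show "(\<lambda>t. (F t - F x) * b t) integrable_on {x - e..x + e}" using i1 by blast
    show "(\<lambda>t. \<eta> * b t) integrable_on {x - e..x + e}" using i2 by blast
    fix t assume t: "t \<in> {x - e..x + e}"
    have "b t \<ge> 0" unfolding b_def using rho_nonneg e by simp
    then show "norm ((F t - F x) * b t) \<le> \<eta> * b t"
      using close[OF t] by (simp add: abs_mult mult_right_mono)
  qed
  then have "\<bar>integral {x-e..x+e} (\<lambda>t. F t * b t) - M * F x\<bar> \<le> \<eta> * M"
    using integral_unique[OF i1] integral_unique[OF i2] integral_unique[OF ib] by simp
  then show ?thesis unfolding b_def by (simp add: mult.commute)
qed

lemma cont_pt:
  fixes F :: "real \<Rightarrow> real"
  assumes "continuous_on UNIV F" "\<eta> > 0"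
  shows "\<exists>d>0. \<forall>t. \<bar>t - x\<bar> < d \<longrightarrow> \<bar>F t - F x\<bar> \<le> \<eta>"
proof -
  have "isCont F x" using assms(1) by (simp add: continuous_on_eq_continuous_at)
  then obtain d where "d > 0" "\<And>t. dist t x < d \<Longrightarrow> dist (F t) (F x) < \<eta>"
    using assms(2) unfolding continuous_at_eps_delta by blast
  then show ?thesis by (auto simp: dist_real_def intro!: exI[of _ d] less_imp_le)
qed

lemma DBR:
  fixes F :: "real \<Rightarrow> real"
  assumes cF: "continuous_on UNIV F"
    and W: "\<And>\<psi> a b. test_fun \<psi> \<Longrightarrow> (\<And>t. t \<notin> {a..b} \<Longrightarrow> \<psi> t = 0) \<Longrightarrow>
              integral {a..b} (\<lambda>t. F t * deriv (deriv \<psi>) t) = 0"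
  shows "\<exists>\<alpha> \<beta>. \<forall>t. F t = \<alpha> * t + \<beta>"
proof -
  obtain R R2 M where dR: "\<forall>x. (R has_real_derivative rho x) (at x)"
    and dR2: "\<forall>x. (R2 has_real_derivative R x) (at x)"
    and lft': "\<forall>x. x \<le> -1 \<longrightarrow> R x = 0 \<and> R2 x = 0"
    and rgt': "\<forall>x. x \<ge> 1 \<longrightarrow> R x = M \<and> R2 x = R2 1 + M * (x - 1)"
    and M: "M > 0"
    using bump_prims by (elim exE conjE)
  have lft: "\<And>x. x \<le> -1 \<Longrightarrow> R x = 0 \<and> R2 x = 0" using lft' by blast
  have rgt: "\<And>x. x \<ge> 1 \<Longrightarrow> R x = M \<and> R2 x = R2 1 + M * (x - 1)" using rgt' by blast
  have CkR2: "Ck n R2" for n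
  proof -
    have "Ck n rho" using smooth_rho smooth_def by blast
    then have "Ck (Suc (Suc n)) R2" using dR dR2 by (intro CkI) auto
    then show ?thesis by (rule Ck_Suc_mono[OF Ck_Suc_mono])
  qed
  have sd: "F a - 2 * F (a + h) + F (a + 2 * h) = 0" if h: "h > 0" for a h
  proof -
    define S where "S = F a - 2 * F (a + h) + F (a + 2 * h)"
    have bound: "\<bar>M * S\<bar> \<le> 4 * M * \<eta>" if \<eta>: "\<eta> > 0" for \<eta>
    proof -
      obtain d1 where d1: "d1 > 0" "\<And>t. \<bar>t - a\<bar> < d1 \<Longrightarrow> \<bar>F t - F a\<bar> \<le> \<eta>"
        using cont_pt[OF cF \<eta>] by blast
      obtain d2 where d2: "d2 > 0" "\<And>t. \<bar>t - (a+h)\<bar> < d2 \<Longrightarrow> \<bar>F t - F (a+h)\<bar> \<le> \<eta>"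
        using cont_pt[OF cF \<eta>] by blast
      obtain d3 where d3: "d3 > 0" "\<And>t. \<bar>t - (a+2*h)\<bar> < d3 \<Longrightarrow> \<bar>F t - F (a+2*h)\<bar> \<le> \<eta>"
        using cont_pt[OF cF \<eta>] by blast
      define e where "e = min (min d1 d2) d3 / 2"
      have e: "e > 0" "e < d1" "e < d2" "e < d3" using d1 d2 d3 by (auto simp: e_def)
      define P2 where "P2 x t = e * R2 ((t - x) / e)" for x t
      define P1 where "P1 x t = R ((t - x) / e)" for x t
      define b where "b x t = rho ((t - x) / e) / e" for x t
      define \<Psi> where "\<Psi> t = P2 a t + (-2) * P2 (a+h) t + P2 (a+2*h) t" for t
      define \<Psi>1 where "\<Psi>1 t = P1 a t + (-2) * P1 (a+h) t + P1 (a+2*h) t" for t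
      define \<Psi>2 where "\<Psi>2 t = b a t + (-2) * b (a+h) t + b (a+2*h) t" for t
      have dP2: "((\<lambda>t. P2 x t) has_real_derivative P1 x t) (at t)" for x t
      proof -
        have "((\<lambda>t. R2 ((t - x) / e)) has_real_derivative R ((t - x) / e) / e) (at t)"
          by (rule scale_deriv) (use dR2 e in auto)
        from DERIV_cmult[OF this, of e] show ?thesis using e by (simp add: P2_def P1_def)
      qed
      have dP1: "((\<lambda>t. P1 x t) has_real_derivative b x t) (at t)" for x t
        unfolding P1_def b_def by (rule scale_deriv) (use dR e in auto)
      have dPsi: "(\<Psi> has_real_derivative \<Psi>1 t) (at t)" for t
        unfolding \<Psi>_def \<Psi>1_def by (intro DERIV_add DERIV_cmult dP2)
      have dPsi1: "(\<Psi>1 has_real_derivative \<Psi>2 t) (at t)" for t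
        unfolding \<Psi>1_def \<Psi>2_def by (intro DERIV_add DERIV_cmult dP1)
      have dd: "deriv (deriv \<Psi>) = \<Psi>2"
      proof -
        have "deriv \<Psi> = \<Psi>1" using dPsi by (auto intro!: ext DERIV_imp_deriv)
        moreover have "deriv \<Psi>1 = \<Psi>2" using dPsi1 by (auto intro!: ext DERIV_imp_deriv)
        ultimately show ?thesis by simp
      qed
      have smooth: "smooth \<Psi>"
        unfolding smooth_def
      proof
        fix n
        have c: "Ck n (P2 x)" for x
          unfolding P2_def by (intro Ck_mult Ck_const Ck_shift CkR2)
        show "Ck n \<Psi>" unfolding \<Psi>_def[abs_def] by (intro Ck_add Ck_mult Ck_const c)
      qed
      have supp: "\<Psi> t = 0" if t: "t \<notin> {a-e..a+2*h+e}" for t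
      proof (cases "t < a - e")
        case True
        have "(t - x) / e \<le> -1" if "x \<ge> a" for x
          using True that e by (simp add: pos_divide_le_eq)
        then have P2l: "P2 x t = 0" if "x \<ge> a" for x
        proof -
          have "R2 ((t - x) / e) = 0" using lft[OF \<open>x \<ge> a \<Longrightarrow> (t - x) / e \<le> -1\<close>[OF that]] by blast
          then show ?thesis unfolding P2_def by simp
        qed
        show ?thesis unfolding \<Psi>_def using h P2l[of a] P2l[of "a+h"] P2l[of "a+2*h"] by simp
      next
        case False
        then have tt: "t > a + 2*h + e" using t by auto
        have ge1: "(t - x) / e \<ge> 1" if "x \<le> a + 2*h" for x
          using tt that e by (simp add: pos_le_divide_eq)
        have P2r: "P2 x t = e * (R2 1 + M * ((t - x) / e - 1))" if "x \<le> a + 2*h" for x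
        proof -
          have "R2 ((t - x) / e) = R2 1 + M * ((t - x) / e - 1)" using rgt[OF ge1[OF that]] by blast
          then show ?thesis unfolding P2_def by simp
        qed
        have "\<Psi> t = e * (R2 1 + M * ((t - a) / e - 1)) + (-2) * (e * (R2 1 + M * ((t - (a+h)) / e - 1)))
              + e * (R2 1 + M * ((t - (a+2*h)) / e - 1))"
          unfolding \<Psi>_def using h P2r[of a] P2r[of "a+h"] P2r[of "a+2*h"] by simp
        also have "\<dots> = 0" using e by (simp add: field_simps)
        finally show ?thesis .
      qed
      have tf: "test_fun \<Psi>" by (rule smooth_test_fun[OF smooth supp])
      define A where "A = a - e"
      define B where "B = a + 2*h + e"
      have W0: "integral {A..B} (\<lambda>t. F t * \<Psi>2 t) = 0"
        using W[OF tf, of A B] supp dd unfolding A_def B_def by auto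
      define fx where "fx x t = F t * b x t" for x t
      have cfx: "continuous_on UNIV (fx x)" for x
        unfolding fx_def b_def
        by (intro continuous_intros continuous_on_compose2[OF cont_rho] cF) (use e in auto)
      have ifx: "(fx x has_integral integral {A..B} (fx x)) {A..B}" for x
        by (intro integrable_integral integrable_continuous_interval continuous_on_subset[OF cfx]) auto
      have "((\<lambda>t. fx a t + (-2) * fx (a+h) t + fx (a+2*h) t) has_integral
             integral {A..B} (fx a) + (-2) * integral {A..B} (fx (a+h)) + integral {A..B} (fx (a+2*h))) {A..B}"
        by (intro has_integral_add has_integral_mult_right ifx)
      moreover have "(\<lambda>t. fx a t + (-2) * fx (a+h) t + fx (a+2*h) t) = (\<lambda>t. F t * \<Psi>2 t)"
        unfolding fx_def \<Psi>2_def by (auto simp: algebra_simps)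
      ultimately have "((\<lambda>t. F t * \<Psi>2 t) has_integral
             integral {A..B} (fx a) + (-2) * integral {A..B} (fx (a+h)) + integral {A..B} (fx (a+2*h))) {A..B}"
        by simp
      then have "integral {A..B} (\<lambda>t. F t * \<Psi>2 t) = 
             integral {A..B} (fx a) + (-2) * integral {A..B} (fx (a+h)) + integral {A..B} (fx (a+2*h))"
        by (rule integral_unique)
      then have sum0: "integral {A..B} (fx a) + (-2) * integral {A..B} (fx (a+h)) + integral {A..B} (fx (a+2*h)) = 0"
        using W0 by simp
      have shr: "integral {A..B} (fx x) = integral {x-e..x+e} (\<lambda>t. F t * (rho ((t - x) / e) / e))"
        if "x \<in> {a, a+h, a+2*h}" for x
      proof -
        have "integral {A..B} (fx x) = integral {x-e..x+e} (fx x)"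
        proof (rule int_shrink[OF cfx])
          fix t assume "t \<notin> {x-e..x+e}"
          then have "(t - x) / e \<notin> {-1<..<1}" using e
            by (auto simp: pos_divide_less_eq pos_less_divide_eq)
          then show "fx x t = 0" unfolding fx_def b_def using rho_supp by simp
        next
          show "{x-e..x+e} \<subseteq> {A..B}" using that h e unfolding A_def B_def by auto
        qed
        then show ?thesis unfolding fx_def b_def by simp
      qed
      have R1: "R 1 = M" and Rm1: "R (-1) = 0" using lft rgt by auto
      have jb: "\<bar>integral {x-e..x+e} (\<lambda>t. F t * (rho ((t - x) / e) / e)) - M * F x\<bar> \<le> M * \<eta>"
        if "\<And>t. t \<in> {x-e..x+e} \<Longrightarrow> \<bar>F t - F x\<bar> \<le> \<eta>" for x
        by (rule J_bound[OF cF e(1) _ R1 Rm1 that]) (use dR in auto)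
      have j1: "\<bar>integral {A..B} (fx a) - M * F a\<bar> \<le> M * \<eta>"
      proof -
        have c: "\<And>t. t \<in> {a-e..a+e} \<Longrightarrow> \<bar>F t - F a\<bar> \<le> \<eta>"
        proof -
          fix t assume "t \<in> {a-e..a+e}"
          then have "\<bar>t - a\<bar> < d1" using e by auto
          then show "\<bar>F t - F a\<bar> \<le> \<eta>" using d1(2) by blast
        qed
        show ?thesis using shr[of a] jb[OF c] by simp
      qed
      have j2: "\<bar>integral {A..B} (fx (a+h)) - M * F (a+h)\<bar> \<le> M * \<eta>"
      proof -
        have c: "\<And>t. t \<in> {(a+h)-e..(a+h)+e} \<Longrightarrow> \<bar>F t - F (a+h)\<bar> \<le> \<eta>"
        proof -
          fix t assume "t \<in> {(a+h)-e..(a+h)+e}"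
          then have "\<bar>t - (a+h)\<bar> < d2" using e by auto
          then show "\<bar>F t - F (a+h)\<bar> \<le> \<eta>" using d2(2) by blast
        qed
        show ?thesis using shr[of "a+h"] jb[OF c] by simp
      qed
      have j3: "\<bar>integral {A..B} (fx (a+2*h)) - M * F (a+2*h)\<bar> \<le> M * \<eta>"
      proof -
        have c: "\<And>t. t \<in> {(a+2*h)-e..(a+2*h)+e} \<Longrightarrow> \<bar>F t - F (a+2*h)\<bar> \<le> \<eta>"
        proof -
          fix t assume "t \<in> {(a+2*h)-e..(a+2*h)+e}"
          then have "\<bar>t - (a+2*h)\<bar> < d3" using e by auto
          then show "\<bar>F t - F (a+2*h)\<bar> \<le> \<eta>" using d3(2) by blast
        qed
        show ?thesis using shr[of "a+2*h"] jb[OF c] by simp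
      qed
      have "M * S = - ((integral {A..B} (fx a) - M * F a) - 2 * (integral {A..B} (fx (a+h)) - M * F (a+h))
                   + (integral {A..B} (fx (a+2*h)) - M * F (a+2*h)))"
        using sum0 unfolding S_def by (simp add: algebra_simps)
      then show ?thesis using j1 j2 j3 by (simp add: abs_le_iff)
    qed
    show ?thesis
    proof (rule ccontr)
      assume "\<not> ?thesis"
      then have "S \<noteq> 0" unfolding S_def by simp
      have "\<bar>M * S\<bar> \<le> 4 * M * (\<bar>S\<bar> / 8)" using bound[of "\<bar>S\<bar>/8"] \<open>S \<noteq> 0\<close> by simp
      then have "M * \<bar>S\<bar> \<le> M * (\<bar>S\<bar> / 2)" using M by (simp add: abs_mult)
      then have "\<bar>S\<bar> \<le> \<bar>S\<bar> / 2" using M by simp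
      then show False using \<open>S \<noteq> 0\<close> by simp
    qed
  qed
  show ?thesis by (rule sd_affine[OF cF sd])
qed

lemma deriv_zero_outside:
  fixes f :: "real \<Rightarrow> real"
  assumes z: "\<And>t. t \<notin> {a..b} \<Longrightarrow> f t = 0" and t: "t \<notin> {a..b}"
  shows "deriv f t = 0"
proof -
  have "t \<in> {..<a} \<union> {b<..}" using t by auto
  moreover have "open ({..<a} \<union> {b<..})" by auto
  moreover have "\<And>x. x \<in> {..<a} \<union> {b<..} \<Longrightarrow> f x = 0" using z by auto
  ultimately have "(f has_real_derivative 0) (at t)"
    by (intro has_field_derivative_transform_within_open[of "\<lambda>_. 0" 0 t "{..<a} \<union> {b<..}" f]) auto
  then show ?thesis by (rule DERIV_imp_deriv)
qed

lemma test_props: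
  assumes tf: "test_fun \<psi>" and z: "\<And>t. t \<notin> {a..b} \<Longrightarrow> \<psi> t = 0"
  shows "\<And>t. (\<psi> has_real_derivative deriv \<psi> t) (at t)"
    "\<And>t. (deriv \<psi> has_real_derivative deriv (deriv \<psi>) t) (at t)"
    "continuous_on UNIV \<psi>" "continuous_on UNIV (deriv \<psi>)" "continuous_on UNIV (deriv (deriv \<psi>))"
    "\<And>t. t \<notin> {a..b} \<Longrightarrow> deriv \<psi> t = 0"
    "\<And>t. t \<notin> {a..b} \<Longrightarrow> deriv (deriv \<psi>) t = 0"
proof -
  have d0: "\<And>x. \<psi> differentiable (at x)" using tf unfolding test_fun_def
    by (metis funpow_0)
  have d1: "\<And>x. (deriv \<psi>) differentiable (at x)" using tf unfolding test_fun_def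
    by (metis One_nat_def funpow.simps(2) funpow_0 o_apply)
  have d2: "\<And>x. (deriv (deriv \<psi>)) differentiable (at x)" using tf unfolding test_fun_def
    by (metis (no_types, lifting) funpow.simps(2) funpow_0 o_apply numeral_2_eq_2)
  show D0: "\<And>t. (\<psi> has_real_derivative deriv \<psi> t) (at t)" using d0 DERIV_deriv_iff_real_differentiable by blast
  show D1: "\<And>t. (deriv \<psi> has_real_derivative deriv (deriv \<psi>) t) (at t)" using d1 DERIV_deriv_iff_real_differentiable by blast
  show "continuous_on UNIV \<psi>" using d0 by (meson continuous_at_imp_continuous_on differentiable_imp_continuous_within)
  show "continuous_on UNIV (deriv \<psi>)" using d1 by (meson continuous_at_imp_continuous_on differentiable_imp_continuous_within)
  show "continuous_on UNIV (deriv (deriv \<psi>))" using d2 by (meson continuous_at_imp_continuous_on differentiable_imp_continuous_within)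
  show z1: "\<And>t. t \<notin> {a..b} \<Longrightarrow> deriv \<psi> t = 0" by (rule deriv_zero_outside[OF z])
  show "\<And>t. t \<notin> {a..b} \<Longrightarrow> deriv (deriv \<psi>) t = 0" by (rule deriv_zero_outside[OF z1])
qed

lemma IBP:
  fixes K k p p' :: "real \<Rightarrow> real"
  assumes dK: "\<And>t. (K has_real_derivative k t) (at t)" and dp: "\<And>t. (p has_real_derivative p' t) (at t)"
    and ck: "continuous_on UNIV k" and cp': "continuous_on UNIV p'"
    and pA: "p A = 0" and pB: "p B = 0" and AB: "A \<le> B"
  shows "integral {A..B} (\<lambda>t. k t * p t) = - integral {A..B} (\<lambda>t. K t * p' t)"
proof -
  have cK: "continuous_on UNIV K" using dK by (meson DERIV_isCont continuous_at_imp_continuous_on)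
  have cp: "continuous_on UNIV p" using dp by (meson DERIV_isCont continuous_at_imp_continuous_on)
  have d: "\<And>t. ((\<lambda>t. K t * p t) has_real_derivative k t * p t + K t * p' t) (at t)"
    using dK dp by (auto intro!: derivative_eq_intros)
  have "((\<lambda>t. k t * p t + K t * p' t) has_integral (K B * p B - K A * p A)) {A..B}"
    by (rule FTC[OF d AB])
  then have h0: "((\<lambda>t. k t * p t + K t * p' t) has_integral 0) {A..B}" using pA pB by simp
  have i1: "((\<lambda>t. k t * p t) has_integral integral {A..B} (\<lambda>t. k t * p t)) {A..B}"
    by (intro integrable_integral integrable_continuous_interval continuous_intros continuous_on_subset[OF ck] continuous_on_subset[OF cp]) auto
  have i2: "((\<lambda>t. K t * p' t) has_integral integral {A..B} (\<lambda>t. K t * p' t)) {A..B}"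
    by (intro integrable_integral integrable_continuous_interval continuous_intros continuous_on_subset[OF cK] continuous_on_subset[OF cp']) auto
  have "((\<lambda>t. k t * p t + K t * p' t) has_integral integral {A..B} (\<lambda>t. k t * p t) + integral {A..B} (\<lambda>t. K t * p' t)) {A..B}"
    by (rule has_integral_add[OF i1 i2])
  then have "integral {A..B} (\<lambda>t. k t * p t) + integral {A..B} (\<lambda>t. K t * p' t) = 0"
    using h0 has_integral_unique by blast
  then show ?thesis by simp
qed

lemma REG:
  fixes \<phi> b d :: "real \<Rightarrow> real"
  assumes cb: "continuous_on {0..} b" and cd: "continuous_on {0..} d"
    and cphi: "continuous_on UNIV \<phi>" and nn: "\<And>t. \<phi> t \<ge> 0" and m: "m > 0" and D: "D > 0"
    and weq: "wave_eq_distr m D b d c r \<phi>"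
  shows "\<exists>Bf Df \<alpha>. (\<forall>t. (Bf has_real_derivative b (\<phi> t)) (at t)) \<and> (\<forall>t. (Df has_real_derivative d (\<phi> t)) (at t)) \<and>
     (\<forall>t. ((\<lambda>t. \<phi> t powr m) has_real_derivative (c * \<phi> t - (Bf (t - c * r) - Df t) - \<alpha>) / D) (at t))"
proof -
  have img: "range \<phi> \<subseteq> {0..}" using nn by auto
  have cbp: "continuous_on UNIV (\<lambda>t. b (\<phi> t))" by (rule continuous_on_compose2[OF cb cphi img])
  have cdp: "continuous_on UNIV (\<lambda>t. d (\<phi> t))" by (rule continuous_on_compose2[OF cd cphi img])
  obtain Bf where dBf: "\<And>t. (Bf has_real_derivative b (\<phi> t)) (at t)" using AD[OF cbp] by blast
  obtain Df where dDf: "\<And>t. (Df has_real_derivative d (\<phi> t)) (at t)" using AD[OF cdp] by blast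
  obtain P1 where dP1: "\<And>t. (P1 has_real_derivative \<phi> t) (at t)" using AD[OF cphi] by blast
  define \<tau> where "\<tau> = c * r"
  define g where "g t = b (\<phi> (t - \<tau>)) - d (\<phi> t)" for t
  define G where "G t = Bf (t - \<tau>) - Df t" for t
  have dG: "\<And>t. (G has_real_derivative g t) (at t)"
  proof -
    fix t
    have "((\<lambda>t. Bf (t - \<tau>)) has_real_derivative b (\<phi> (t - \<tau>))) (at t)"
    proof -
      have d2: "((\<lambda>t. t - \<tau>) has_real_derivative 1) (at t)" by (auto intro!: derivative_eq_intros)
      from DERIV_chain2[OF dBf d2] show ?thesis by simp
    qed
    then show "(G has_real_derivative g t) (at t)" unfolding G_def g_def
      by (intro derivative_intros dDf)
  qed
  have cg: "continuous_on UNIV g" unfolding g_def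
    by (intro continuous_intros continuous_on_compose2[OF cbp] cdp) auto
  have cG: "continuous_on UNIV G" using dG by (meson DERIV_isCont continuous_at_imp_continuous_on)
  obtain G2 where dG2: "\<And>t. (G2 has_real_derivative G t) (at t)" using AD[OF cG] by blast
  define u where "u t = \<phi> t powr m" for t
  have cu: "continuous_on UNIV u" unfolding u_def
    by (rule continuous_on_powr') (use cphi nn m in auto)
  have cP1: "continuous_on UNIV P1" using dP1 by (meson DERIV_isCont continuous_at_imp_continuous_on)
  have cG2: "continuous_on UNIV G2" using dG2 by (meson DERIV_isCont continuous_at_imp_continuous_on)
  define F where "F t = c * P1 t - D * u t - G2 t" for t
  have cF: "continuous_on UNIV F" unfolding F_def using cP1 cu cG2 by (intro continuous_intros)
  have W: "integral {a..b'} (\<lambda>t. F t * deriv (deriv \<psi>) t) = 0"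
    if tf: "test_fun \<psi>" and z: "\<And>t. t \<notin> {a..b'} \<Longrightarrow> \<psi> t = 0" for \<psi> a b'
  proof -
    note tp = test_props[OF tf z]
    define A where "A = a - 1"
    define B where "B = max a b' + 1"
    have AB: "A \<le> B" "{a..b'} \<subseteq> {A..B}" "A \<notin> {a..b'}" "B \<notin> {a..b'}" unfolding A_def B_def
      by auto
    let ?p1 = "deriv \<psi>" and ?p2 = "deriv (deriv \<psi>)"
    have z1: "\<And>t. t \<notin> {a..b'} \<Longrightarrow> ?p1 t = 0" by (rule tp(6))
    have z2: "\<And>t. t \<notin> {a..b'} \<Longrightarrow> ?p2 t = 0" by (rule tp(7))
    have zAB: "\<And>t. t \<notin> {A..B} \<Longrightarrow> t \<notin> {a..b'}" using AB by auto
    have eq: "(\<integral>t. - c * \<phi> t * ?p1 t \<partial>lborel) =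
        (\<integral>t. D * (\<phi> t powr m) * ?p2 t - d (\<phi> t) * \<psi> t + b (\<phi> (t - c * r)) * \<psi> t \<partial>lborel)"
      using weq tf unfolding wave_eq_distr_def by blast
    have L: "(\<integral>t. - c * \<phi> t * ?p1 t \<partial>lborel) = integral {A..B} (\<lambda>t. - c * \<phi> t * ?p1 t)"
    proof (rule lborel_HK)
      show "continuous_on UNIV (\<lambda>t. - c * \<phi> t * ?p1 t)" using tp cphi by (intro continuous_intros) auto
      fix t assume "t \<notin> {A..B}"
      then show "- c * \<phi> t * ?p1 t = 0" using z1 zAB by simp
    qed
    have Rr: "(\<integral>t. D * (\<phi> t powr m) * ?p2 t - d (\<phi> t) * \<psi> t + b (\<phi> (t - c * r)) * \<psi> t \<partial>lborel)
        = integral {A..B} (\<lambda>t. D * u t * ?p2 t + g t * \<psi> t)"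
    proof -
      have "(\<lambda>t. D * (\<phi> t powr m) * ?p2 t - d (\<phi> t) * \<psi> t + b (\<phi> (t - c * r)) * \<psi> t)
          = (\<lambda>t. D * u t * ?p2 t + g t * \<psi> t)" unfolding u_def g_def \<tau>_def by (auto simp: algebra_simps)
      moreover have "(\<integral>t. D * u t * ?p2 t + g t * \<psi> t \<partial>lborel) = integral {A..B} (\<lambda>t. D * u t * ?p2 t + g t * \<psi> t)"
      proof (rule lborel_HK)
        show "continuous_on UNIV (\<lambda>t. D * u t * ?p2 t + g t * \<psi> t)"
          using tp cu cg by (intro continuous_intros) auto
        fix t assume "t \<notin> {A..B}"
        then have "t \<notin> {a..b'}" using zAB by blast
        then show "D * u t * ?p2 t + g t * \<psi> t = 0" using z2 z by simp
      qed
      ultimately show ?thesis by simp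
    qed
    have i1: "integral {A..B} (\<lambda>t. \<phi> t * ?p1 t) = - integral {A..B} (\<lambda>t. P1 t * ?p2 t)"
      by (rule IBP[OF dP1 tp(2) cphi tp(5) _ _ AB(1)]) (use z1 AB in auto)
    have i2: "integral {A..B} (\<lambda>t. g t * \<psi> t) = - integral {A..B} (\<lambda>t. G t * ?p1 t)"
      by (rule IBP[OF dG tp(1) cg tp(4) _ _ AB(1)]) (use z AB in auto)
    have i3: "integral {A..B} (\<lambda>t. G t * ?p1 t) = - integral {A..B} (\<lambda>t. G2 t * ?p2 t)"
      by (rule IBP[OF dG2 tp(2) cG tp(5) _ _ AB(1)]) (use z1 AB in auto)
    have int: "(\<lambda>t. f t * h t) integrable_on {A..B}" if "continuous_on UNIV f" "continuous_on UNIV h" for f h :: "real \<Rightarrow> real"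
      by (intro integrable_continuous_interval continuous_intros continuous_on_subset[OF that(1)] continuous_on_subset[OF that(2)]) auto
    have I1: "integral {A..B} (\<lambda>t. - c * \<phi> t * ?p1 t) = - c * integral {A..B} (\<lambda>t. \<phi> t * ?p1 t)"
      by (simp only: mult.assoc integral_mult_right)
    have hi: "((\<lambda>t. f t * h t) has_integral integral {A..B} (\<lambda>t. f t * h t)) {A..B}" if "continuous_on UNIV f" "continuous_on UNIV h" for f h :: "real \<Rightarrow> real"
      using int[OF that] by (rule integrable_integral)
    have I2: "integral {A..B} (\<lambda>t. D * u t * ?p2 t + g t * \<psi> t) = D * integral {A..B} (\<lambda>t. u t * ?p2 t) + integral {A..B} (\<lambda>t. g t * \<psi> t)"
    proof -
      have "((\<lambda>t. D * (u t * ?p2 t) + g t * \<psi> t) has_integral D * integral {A..B} (\<lambda>t. u t * ?p2 t) + integral {A..B} (\<lambda>t. g t * \<psi> t)) {A..B}"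
        by (intro has_integral_add has_integral_mult_right hi cu tp(5) cg tp(3))
      then show ?thesis by (simp add: mult.assoc integral_unique)
    qed
    have "c * integral {A..B} (\<lambda>t. P1 t * ?p2 t) = D * integral {A..B} (\<lambda>t. u t * ?p2 t) + integral {A..B} (\<lambda>t. G2 t * ?p2 t)"
      using eq L Rr I1 I2 i1 i2 i3 by simp
    moreover have "integral {A..B} (\<lambda>t. F t * ?p2 t) = c * integral {A..B} (\<lambda>t. P1 t * ?p2 t) - D * integral {A..B} (\<lambda>t. u t * ?p2 t) - integral {A..B} (\<lambda>t. G2 t * ?p2 t)"
    proof -
      have "(\<lambda>t. F t * ?p2 t) = (\<lambda>t. c * (P1 t * ?p2 t) - D * (u t * ?p2 t) - G2 t * ?p2 t)"
        unfolding F_def by (auto simp: algebra_simps)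
      moreover have "((\<lambda>t. c * (P1 t * ?p2 t) - D * (u t * ?p2 t) - G2 t * ?p2 t) has_integral
          c * integral {A..B} (\<lambda>t. P1 t * ?p2 t) - D * integral {A..B} (\<lambda>t. u t * ?p2 t) - integral {A..B} (\<lambda>t. G2 t * ?p2 t)) {A..B}"
        by (intro has_integral_diff has_integral_mult_right hi cu tp(5) cP1 cG2)
      ultimately show ?thesis by (simp add: integral_unique)
    qed
    ultimately have "integral {A..B} (\<lambda>t. F t * ?p2 t) = 0" by simp
    moreover have "integral {A..B} (\<lambda>t. F t * ?p2 t) = integral {a..b'} (\<lambda>t. F t * ?p2 t)"
    proof (rule int_shrink)
      show "continuous_on UNIV (\<lambda>t. F t * ?p2 t)" using cF tp by (intro continuous_intros) auto
      show "{a..b'} \<subseteq> {A..B}" using AB by auto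
      fix t assume "t \<notin> {a..b'}" then show "F t * ?p2 t = 0" using z2 by simp
    qed
    ultimately show ?thesis by simp
  qed
  obtain \<alpha> \<beta> where ab: "\<And>t. F t = \<alpha> * t + \<beta>" using DBR[OF cF W] by blast
  have ueq: "(\<lambda>t. \<phi> t powr m) = (\<lambda>t. (c * P1 t - G2 t - \<alpha> * t - \<beta>) / D)"
  proof
    fix t show "\<phi> t powr m = (c * P1 t - G2 t - \<alpha> * t - \<beta>) / D"
      using ab[of t] D unfolding F_def u_def by (simp add: field_simps)
  qed
  have "((\<lambda>t. (c * P1 t - G2 t - \<alpha> * t - \<beta>) / D) has_real_derivative (c * \<phi> t - G t - \<alpha>) / D) (at t)" for t
    using dP1 dG2 D by (auto intro!: derivative_eq_intros)
  then show ?thesis using dBf dDf unfolding ueq G_def \<tau>_def by blast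
qed

lemma noninc:
  fixes F :: "real \<Rightarrow> real"
  assumes "\<And>x. (F has_real_derivative f x) (at x)" "\<And>x. x \<in> {a..b} \<Longrightarrow> f x \<le> 0" "a \<le> b"
  shows "F b \<le> F a"
  by (rule DERIV_nonpos_imp_nonincreasing[OF assms(3)]) (use assms(1,2) in auto)

locale wsetting =
  fixes m D c r B k v0 :: real and b d \<phi> Bf Df :: "real \<Rightarrow> real" and \<alpha> :: real and t1 :: ereal
  assumes m: "m \<ge> 1" and D: "D > 0" and c: "c > 0" and r: "r \<ge> 0" and B: "B \<ge> 0"
    and k: "k > 0" and v0: "v0 > 0"
    and bnn: "\<And>x. x \<ge> 0 \<Longrightarrow> b x \<ge> 0"
    and kx: "\<And>x. 0 \<le> x \<Longrightarrow> x \<le> v0 \<Longrightarrow> k * x \<le> b x - d x"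
    and bB: "\<And>x. 0 \<le> x \<Longrightarrow> x \<le> v0 \<Longrightarrow> b x \<le> B * x"
    and cphi: "continuous_on UNIV \<phi>" and nn: "\<And>t. \<phi> t \<ge> 0"
    and lim0: "(\<phi> \<longlongrightarrow> 0) at_bot"
    and mono: "\<And>x y. x \<le> y \<Longrightarrow> ereal y < t1 \<Longrightarrow> \<phi> x \<le> \<phi> y"
    and dBf: "\<And>t. (Bf has_real_derivative b (\<phi> t)) (at t)"
    and dDf: "\<And>t. (Df has_real_derivative d (\<phi> t)) (at t)"
    and du: "\<And>t. ((\<lambda>t. \<phi> t powr m) has_real_derivative (c * \<phi> t - (Bf (t - c * r) - Df t) - \<alpha>) / D) (at t)"
begin

definition "\<tau> = c * r"
definition "C = c + \<tau> * B"
definition "V x = c * \<phi> x - (Bf (x - \<tau>) - Df x) - \<alpha>"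
definition "u x = \<phi> x powr m"

lemma tau: "\<tau> \<ge> 0" using c r by (simp add: \<tau>_def)
lemma Cpos: "C > 0" unfolding C_def using add_pos_nonneg[OF c mult_nonneg_nonneg[OF tau B]] .

lemma dDu: "((\<lambda>t. D * u t) has_real_derivative V x) (at x)"
proof -
  have "((\<lambda>t. D * u t) has_real_derivative D * ((c * \<phi> x - (Bf (x - c * r) - Df x) - \<alpha>) / D)) (at x)"
    unfolding u_def by (intro DERIV_cmult du)
  then show ?thesis using D by (simp add: V_def \<tau>_def)
qed

lemma u_nn: "u x \<ge> 0" unfolding u_def by simp

lemma u_mono: "x \<le> y \<Longrightarrow> ereal y < t1 \<Longrightarrow> u x \<le> u y"
  unfolding u_def using mono nn m by (intro powr_mono2) auto

lemma Vnn: assumes "ereal x < t1" shows "V x \<ge> 0"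
proof (rule ccontr)
  assume "\<not> V x \<ge> 0"
  then have "V x < 0" by simp
  from DERIV_neg_dec_right[OF dDu this] obtain d where d: "d > 0" "\<And>h. h > 0 \<Longrightarrow> h < d \<Longrightarrow> D * u (x + h) < D * u x"
    by blast
  obtain y where y: "x < y" "ereal y < t1" "y < x + d"
  proof (cases t1)
    case (real T)
    have "(x + T)/2 < T" using assms real by auto
    moreover have "min (x + d/2) ((x + T)/2) \<le> (x + T)/2" by (rule min.cobounded2)
    ultimately have "min (x + d/2) ((x + T)/2) < T" by linarith
    moreover define y0 where "y0 = min (x + d/2) ((x + T)/2)"
    ultimately have "y0 < T" by simp
    then have "ereal y0 < t1" using real by simp
    moreover have "x < T" using assms real by simp
    then have "x < y0" "y0 < x + d" using d unfolding y0_def by auto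
    ultimately show ?thesis using that by blast
  next
    case PInf
    show ?thesis by (rule that[of "x + d/2"]) (use d PInf in auto)
  next
    case MInf then show ?thesis using assms by simp
  qed
  have "D * u (x + (y - x)) < D * u x" using d(2)[of "y - x"] y by simp
  moreover have "u x \<le> u y" using u_mono[of x y] y by simp
  ultimately show False using D by (simp add: mult_le_cancel_left_pos) 
qed

lemma smallV:
  assumes "\<delta> > 0" "ereal s0 < t1"
  shows "\<exists>s\<le>s0. V s < \<delta>"
proof (rule ccontr)
  assume "\<not> ?thesis"
  then have ge: "\<And>s. s \<le> s0 \<Longrightarrow> V s \<ge> \<delta>" by force
  define s where "s = s0 - D * u s0 / \<delta> - 1"
  have "D * u s0 / \<delta> \<ge> 0" using u_nn[of s0] D assms by simp
  then have "s \<le> s0" by (simp add: s_def)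
  have d: "\<And>y. ((\<lambda>y. D * u y - \<delta> * y) has_real_derivative V y - \<delta>) (at y)"
    by (rule DERIV_diff[OF dDu]) (auto intro!: derivative_eq_intros)
  have "D * u s - \<delta> * s \<le> D * u s0 - \<delta> * s0"
    by (rule nondec[OF d _ \<open>s \<le> s0\<close>]) (use ge in auto)
  moreover have "D * u s \<ge> 0" using u_nn D by simp
  ultimately have "\<delta> * (s0 - s) \<le> D * u s0" by (simp add: algebra_simps)
  moreover have "\<delta> * (s0 - s) = D * u s0 + \<delta>" using assms by (simp add: s_def field_simps)
  ultimately show False using assms by simp
qed

lemma key:
  assumes sx: "s \<le> x" and x: "ereal x < t1" and px: "\<phi> x \<le> v0"
  shows "V x \<le> V s + C * \<phi> x - ((Bf x - Df x) - (Bf s - Df s))"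
proof -
  have phy: "\<phi> y \<le> \<phi> x" if "y \<le> x" for y using mono[OF that x] .
  have b1: "Bf (s - \<tau>) \<le> Bf s"
    by (rule nondec[OF dBf]) (use bnn nn tau in auto)
  have b2: "Bf x - Bf (x - \<tau>) \<le> \<tau> * B * \<phi> x"
  proof -
    have d: "\<And>y. ((\<lambda>y. Bf y - B * \<phi> x * y) has_real_derivative b (\<phi> y) - B * \<phi> x) (at y)"
      using dBf by (auto intro!: derivative_eq_intros)
    have "Bf x - B * \<phi> x * x \<le> Bf (x - \<tau>) - B * \<phi> x * (x - \<tau>)"
    proof (rule noninc[OF d])
      fix y assume "y \<in> {x - \<tau>..x}"
      then have "\<phi> y \<le> \<phi> x" using phy by auto
      then have "b (\<phi> y) \<le> B * \<phi> y" using bB nn px by auto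
      also have "\<dots> \<le> B * \<phi> x" using \<open>\<phi> y \<le> \<phi> x\<close> B by (simp add: mult_left_mono)
      finally show "b (\<phi> y) - B * \<phi> x \<le> 0" by simp
    qed (use tau in auto)
    then show ?thesis by (simp add: algebra_simps)
  qed
  have "V x - V s = c * (\<phi> x - \<phi> s) - ((Bf x - Df x) - (Bf s - Df s)) + (Bf x - Bf (x - \<tau>)) - (Bf s - Bf (s - \<tau>))"
    unfolding V_def by (simp add: algebra_simps)
  moreover have "c * \<phi> s \<ge> 0" using c nn by simp
  ultimately show ?thesis using b1 b2 unfolding C_def by (simp add: algebra_simps)
qed

lemma Ediff:
  assumes sx: "s \<le> x" and x: "ereal x < t1" and px: "\<phi> x \<le> v0"
    and dQ: "\<And>t. (Q has_real_derivative \<phi> t) (at t)"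
  shows "k * (Q x - Q s) \<le> (Bf x - Df x) - (Bf s - Df s)"
proof -
  have d: "\<And>y. ((\<lambda>y. (Bf y - Df y) - k * Q y) has_real_derivative (b (\<phi> y) - d (\<phi> y)) - k * \<phi> y) (at y)"
    using dBf dDf dQ by (auto intro!: derivative_eq_intros)
  have "(Bf s - Df s) - k * Q s \<le> (Bf x - Df x) - k * Q x"
  proof (rule nondec[OF d _ sx])
    fix y assume "y \<in> {s..x}"
    then have "\<phi> y \<le> v0" using mono[of y x] x px by auto
    then show "0 \<le> b (\<phi> y) - d (\<phi> y) - k * \<phi> y" using kx[of "\<phi> y"] nn by auto
  qed
  then show ?thesis by (simp add: algebra_simps)
qed

lemma Vbound:
  assumes x: "ereal x < t1" and px: "\<phi> x \<le> v0"
  shows "V x \<le> C * \<phi> x"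
proof (rule field_le_epsilon)
  fix \<delta> :: real assume "\<delta> > 0"
  obtain s where s: "s \<le> x" "V s < \<delta>" using smallV[OF \<open>\<delta> > 0\<close> x] by blast
  obtain Q where dQ: "\<And>t. (Q has_real_derivative \<phi> t) (at t)" using AD[OF cphi] by blast
  have "k * (Q x - Q s) \<ge> 0" using k nondec[OF dQ _ s(1)] nn by simp
  then show "V x \<le> C * \<phi> x + \<delta>" using key[OF s(1) x px] Ediff[OF s(1) x px dQ] s by linarith
qed

lemma main_ineq:
  assumes t: "ereal t < t1" and pt: "\<phi> t \<le> v0"
  shows "k * D * u t \<le> C^2 * \<phi> t"
proof -
  obtain Q where dQ: "\<And>t. (Q has_real_derivative \<phi> t) (at t)" using AD[OF cphi] by blast
  have "k * D * u t \<le> C^2 * \<phi> t + (k * D + C) * \<delta>" if "\<delta> > 0" for \<delta>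
  proof -
    define \<delta>' where "\<delta>' = min \<delta> 1"
    have \<delta>': "\<delta>' > 0" "\<delta>' \<le> \<delta>" "\<delta>' \<le> 1" using that by (auto simp: \<delta>'_def)
    have "eventually (\<lambda>s. \<phi> s < \<delta>') at_bot"
      using order_tendstoD(2)[OF lim0 \<delta>'(1)] .
    then obtain s0 where s0: "\<And>s. s \<le> s0 \<Longrightarrow> \<phi> s < \<delta>'" by (auto simp: eventually_at_bot_linorder)
    have "ereal (min s0 t) \<le> ereal t" by simp
    then have "ereal (min s0 t) < t1" using t by (rule order.strict_trans1)
    then obtain s where s: "s \<le> min s0 t" "V s < \<delta>'" using smallV[OF \<delta>'(1)] by blast
    have "\<phi> s < \<delta>'" using s s0 by simp
    have us: "u s < \<delta>'"
    proof (cases "\<phi> s = 0")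
      case True then show ?thesis using \<delta>' by (simp add: u_def)
    next
      case False
      then have "u s \<le> \<phi> s" unfolding u_def using nn[of s] \<open>\<phi> s < \<delta>'\<close> \<delta>' m
        by (intro powr_le_one_le) auto
      then show ?thesis using \<open>\<phi> s < \<delta>'\<close> by simp
    qed
    have st: "s \<le> t" using s by simp
    have e1: "0 \<le> V s + C * \<phi> t - ((Bf t - Df t) - (Bf s - Df s))"
      using key[OF st t pt] Vnn[OF t] by linarith
    have e2: "k * (Q t - Q s) \<le> (Bf t - Df t) - (Bf s - Df s)" by (rule Ediff[OF st t pt dQ])
    have e3: "D * u t - D * u s \<le> C * (Q t - Q s)"
    proof -
      have d: "\<And>y. ((\<lambda>y. D * u y - C * Q y) has_real_derivative V y - C * \<phi> y) (at y)"
        by (rule DERIV_diff[OF dDu DERIV_cmult[OF dQ]])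
      have "D * u t - C * Q t \<le> D * u s - C * Q s"
      proof (rule noninc[OF d _ st])
        fix y assume "y \<in> {s..t}"
        then have "ereal y \<le> ereal t" by simp
        then have yt: "ereal y < t1" using t by (rule order.strict_trans1)
        have "\<phi> y \<le> v0" using mono[of y t] t pt \<open>y \<in> {s..t}\<close> by auto
        note yt this
        then show "V y - C * \<phi> y \<le> 0" using Vbound by simp
      qed
      then show ?thesis by (simp add: algebra_simps)
    qed
    have "k * (D * u t - D * u s) \<le> k * (C * (Q t - Q s))" using e3 k by (simp add: mult_left_mono)
    also have "\<dots> = C * (k * (Q t - Q s))" by simp
    also have "\<dots> \<le> C * (V s + C * \<phi> t)" using e1 e2 Cpos by (intro mult_left_mono) auto
    finally have "k * D * u t \<le> k * D * u s + C * V s + C^2 * \<phi> t"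
      by (simp add: algebra_simps power2_eq_square)
    moreover have "k * D * u s \<le> k * D * \<delta>" using us \<delta>' k D by (intro mult_left_mono) auto
    moreover have "C * V s \<le> C * \<delta>" using s \<delta>' Cpos by (intro mult_left_mono) auto
    ultimately show ?thesis by (simp add: algebra_simps)
  qed
  note A = this
  show ?thesis
  proof (rule field_le_epsilon)
    fix e :: real assume e: "e > 0"
    have p: "k * D + C > 0" using k D Cpos by (simp add: add_pos_pos)
    have "k * D * u t \<le> C^2 * \<phi> t + (k * D + C) * (e / (k * D + C))"
      using A[of "e / (k * D + C)"] e p by simp
    then show "k * D * u t \<le> C^2 * \<phi> t + e" using p by simp
  qed
qed

end

context wsetting begin

lemma no_global_small:
  assumes t1: "t1 = \<infinity>" and small: "\<And>x. \<phi> x \<le> v0" and eps: "\<epsilon> > 0" and ev: "\<forall>\<^sub>F t in at_top. \<epsilon> \<le> \<phi> t"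
  shows False
proof -
  obtain T where T: "\<And>x. x \<ge> T \<Longrightarrow> \<epsilon> \<le> \<phi> x" using ev by (auto simp: eventually_at_top_linorder)
  obtain Q where dQ: "\<And>t. (Q has_real_derivative \<phi> t) (at t)" using AD[OF cphi] by blast
  have VT: "V T \<ge> 0" using Vnn t1 by simp
  define x where "x = T + (V T + C * v0 + 1) / (k * \<epsilon>)"
  have ke: "k * \<epsilon> > 0" using k eps by simp
  have "(V T + C * v0 + 1) / (k * \<epsilon>) \<ge> 0" using VT Cpos v0 ke by simp
  then have Tx: "T \<le> x" by (simp add: x_def)
  have "Q x - \<epsilon> * x \<ge> Q T - \<epsilon> * T"
  proof -
    have d: "\<And>y. ((\<lambda>y. Q y - \<epsilon> * y) has_real_derivative \<phi> y - \<epsilon>) (at y)"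
      by (rule DERIV_diff[OF dQ]) (auto intro!: derivative_eq_intros)
    show ?thesis by (rule nondec[OF d _ Tx]) (use T in auto)
  qed
  then have Qx: "Q x - Q T \<ge> \<epsilon> * (x - T)" by (simp add: algebra_simps)
  have "V x \<le> V T + C * \<phi> x - ((Bf x - Df x) - (Bf T - Df T))"
    by (rule key[OF Tx]) (use t1 small in auto)
  moreover have "k * (Q x - Q T) \<le> (Bf x - Df x) - (Bf T - Df T)"
    by (rule Ediff[OF Tx _ _ dQ]) (use t1 small in auto)
  moreover have "C * \<phi> x \<le> C * v0" using small Cpos by (simp add: mult_left_mono)
  moreover have "k * (Q x - Q T) \<ge> k * (\<epsilon> * (x - T))" using Qx k by (simp add: mult_left_mono)
  moreover have "k * (\<epsilon> * (x - T)) = V T + C * v0 + 1" using k eps by (simp add: x_def)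
  ultimately have "V x \<le> -1" by linarith
  moreover have "V x \<ge> 0" using Vnn t1 by simp
  ultimately show False by simp
qed

end

lemma cont_from_deriv:
  assumes "\<forall>s\<ge>0. (f has_real_derivative f' s) (at s within {0..})"
  shows "continuous_on {0..} f"
  unfolding continuous_on_eq_continuous_within using assms
  by (auto intro: DERIV_continuous)

theorem theorem2p2:
  fixes m D \<kappa> sM :: real and b b1 d d1 d2 :: "real \<Rightarrow> real"
  assumes "m > 1" and "D > 0"
    and "death_rate_assms d d1 d2"
    and "birth_rate_assms b b1 d d1 \<kappa> sM"
  shows "\<exists>\<mu>0 > 0. \<exists>cdot :: real \<Rightarrow> real.
           (\<forall>r\<ge>0. cdot r > 0 \<and>
              (\<forall>c. 0 < c \<and> c < cdot r \<longrightarrow> \<not> (\<exists>\<phi>. wave_solution m D b d \<kappa> c r \<phi>))) \<and>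
           ((\<lambda>r. r * cdot r) \<longlongrightarrow> \<mu>0) at_top"
proof -
  note m = assms(1) and D = assms(2)
  have dd: "\<forall>s\<ge>0. (d has_real_derivative d1 s) (at s within {0..})" and d0: "d 0 = 0"
    using assms(3) unfolding death_rate_assms_def by auto
  have db: "\<forall>s\<ge>0. (b has_real_derivative b1 s) (at s within {0..})"
    and bnn: "\<forall>s\<ge>0. b s \<ge> 0" and b0: "b 0 = 0" and kap: "\<kappa> > 0" and bd1: "b1 0 > d1 0"
    and bcond: "\<forall>s. 0 < s \<and> s < \<kappa> \<longrightarrow> d s < b s \<and> b s \<le> b1 0 * s"
    using assms(4) unfolding birth_rate_assms_def by auto
  have cb: "continuous_on {0..} b" by (rule cont_from_deriv[OF db])
  have cd: "continuous_on {0..} d" by (rule cont_from_deriv[OF dd])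
  define k where "k = (b1 0 - d1 0) / 2"
  have k: "k > 0" using bd1 by (simp add: k_def)
  have "((\<lambda>y. b y - d y) has_real_derivative b1 0 - d1 0) (at 0 within {0..})"
    using db dd by (intro DERIV_diff) auto
  then have lim: "((\<lambda>y. ((b y - d y) - (b 0 - d 0)) / (y - 0)) \<longlongrightarrow> b1 0 - d1 0) (at 0 within {0..})"
    by (simp add: has_field_derivative_iff)
  have "k < b1 0 - d1 0" using bd1 by (simp add: k_def)
  from order_tendstoD(1)[OF lim this]
  obtain \<delta> where \<delta>: "\<delta> > 0" "\<And>x. x \<in> {0..} \<Longrightarrow> x \<noteq> 0 \<and> dist x 0 < \<delta> \<Longrightarrow> k < ((b x - d x) - (b 0 - d 0)) / (x - 0)"
    unfolding eventually_at by blast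
  define v0 where "v0 = min (\<delta>/2) (\<kappa>/2)"
  have v0: "v0 > 0" "v0 < \<kappa>" "v0 < \<delta>" using \<delta> kap by (auto simp: v0_def)
  have kx: "k * x \<le> b x - d x" if "0 \<le> x" "x \<le> v0" for x
  proof (cases "x = 0")
    case True then show ?thesis using b0 d0 by simp
  next
    case False
    then have "x > 0" using that by simp
    have "k < (b x - d x) / x" using \<delta>(2)[of x] b0 d0 that v0 \<open>x > 0\<close> by (auto simp: dist_real_def)
    then show ?thesis using \<open>x > 0\<close> by (simp add: pos_less_divide_eq less_imp_le)
  qed
  define B where "B = \<bar>b1 0\<bar> + 1"
  have B: "B > 0" by (simp add: B_def add_nonneg_pos)
  have bB: "b x \<le> B * x" if "0 \<le> x" "x \<le> v0" for x
  proof (cases "x = 0")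
    case True then show ?thesis using b0 by simp
  next
    case False
    then have "0 < x" "x < \<kappa>" using that v0 by auto
    then have "b x \<le> b1 0 * x" using bcond by blast
    also have "\<dots> \<le> B * x" using \<open>0 < x\<close> by (intro mult_right_mono) (auto simp: B_def)
    finally show ?thesis .
  qed
  define \<mu> where "\<mu> = sqrt (k * D * v0 powr (m - 1))"
  have \<mu>: "\<mu> > 0" using k D v0 by (simp add: \<mu>_def)
  have \<mu>2: "\<mu>^2 = k * D * v0 powr (m - 1)" using k D v0 by (simp add: \<mu>_def)
  define cdot where "cdot r = \<mu> / (1 + r * B)" for r
  have nowave: "\<not> (\<exists>\<phi>. wave_solution m D b d \<kappa> c r \<phi>)" if r: "r \<ge> 0" and c: "0 < c" "c < cdot r" for r c
  proof
    assume "\<exists>\<phi>. wave_solution m D b d \<kappa> c r \<phi>"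
    then obtain \<phi> where "semi_wavefront m D b d \<kappa> c r \<phi>"
      unfolding wave_solution_def wavefront_def by blast
    then have cphi: "continuous_on UNIV \<phi>" and nn: "\<And>t. 0 \<le> \<phi> t" and weq: "wave_eq_distr m D b d c r \<phi>"
      and lim0: "(\<phi> \<longlongrightarrow> 0) at_bot" and epsex: "\<exists>\<epsilon>>0. \<forall>\<^sub>F t in at_top. \<epsilon> \<le> \<phi> t"
      and t0ex: "\<exists>t0::ereal. t0 \<noteq> -\<infinity> \<and> mono_on {t. ereal t < t0} \<phi> \<and>
        (\<forall>t1::ereal. t0 < t1 \<longrightarrow> \<not> mono_on {t. ereal t < t1} \<phi>) \<and>
        (t0 \<noteq> \<infinity> \<longrightarrow> \<phi> (real_of_ereal t0) > \<kappa>)"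
      unfolding semi_wavefront_def by auto
    obtain \<epsilon> where eps: "\<epsilon> > 0" "\<forall>\<^sub>F t in at_top. \<epsilon> \<le> \<phi> t" using epsex by blast
    obtain t0 :: ereal where t0: "t0 \<noteq> -\<infinity>" "mono_on {t. ereal t < t0} \<phi>"
      "t0 \<noteq> \<infinity> \<Longrightarrow> \<phi> (real_of_ereal t0) > \<kappa>" using t0ex by blast
    obtain Bf Df \<alpha> where reg: "\<forall>t. (Bf has_real_derivative b (\<phi> t)) (at t)" "\<forall>t. (Df has_real_derivative d (\<phi> t)) (at t)"
      "\<forall>t. ((\<lambda>t. \<phi> t powr m) has_real_derivative (c * \<phi> t - (Bf (t - c * r) - Df t) - \<alpha>) / D) (at t)"
      using REG[OF cb cd cphi nn _ D weq] m by auto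
    have mono: "\<phi> x \<le> \<phi> y" if "x \<le> y" "ereal y < t0" for x y
    proof -
      have "ereal x < t0" using that by (meson ereal_less_eq(3) order.strict_trans1)
      then show ?thesis using mono_onD[OF t0(2)] that by auto
    qed
    interpret W: wsetting m D c r B k v0 b d \<phi> Bf Df \<alpha> t0
      by unfold_locales (use m D c r B k v0 bnn kx bB cphi nn lim0 mono reg in auto)
    have "\<exists>s. \<forall>x\<le>s. \<phi> x < v0"
      using order_tendstoD(2)[OF lim0 v0(1)] by (auto simp: eventually_at_bot_linorder)
    then obtain s0 where s0: "\<And>x. x \<le> s0 \<Longrightarrow> \<phi> x < v0" by blast
    have "\<exists>t. ereal t < t0 \<and> \<phi> t = v0"
    proof (cases t0)
      case (real T0)
      have pT: "\<phi> T0 > v0" using t0(3) real v0 by simp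
      define s where "s = min s0 T0"
      have "\<phi> s \<le> v0" "s \<le> T0" using s0[of s] by (auto simp: s_def)
      then obtain x where x: "s \<le> x" "x \<le> T0" "\<phi> x = v0"
        using IVT'[of \<phi> s v0 T0] pT cphi continuous_on_subset by fastforce
      then have "x \<noteq> T0" using pT by auto
      then have "x < T0" using x by simp
      then show ?thesis using x(3) real by (intro exI[of _ x]) auto
    next
      case PInf
      show ?thesis
      proof (cases "\<forall>x. \<phi> x \<le> v0")
        case True
        then show ?thesis using W.no_global_small[OF PInf _ eps] by blast
      next
        case False
        then obtain t' where t': "\<phi> t' > v0" by (auto simp: not_le)
        define s where "s = min s0 t'"
        have "\<phi> s \<le> v0" "s \<le> t'" using s0[of s] by (auto simp: s_def)
        then obtain x where x: "s \<le> x" "x \<le> t'" "\<phi> x = v0"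
          using IVT'[of \<phi> s v0 t'] t' cphi continuous_on_subset by fastforce
        then show ?thesis using PInf by auto
      qed
    next
      case MInf then show ?thesis using t0(1) by simp
    qed
    then obtain t where t: "ereal t < t0" "\<phi> t = v0" by blast
    have ineq: "k * D * W.u t \<le> W.C^2 * \<phi> t" by (rule W.main_ineq[OF t(1)]) (use t in simp)
    have "W.u t = v0 powr (m - 1) * v0" unfolding W.u_def t(2)
      using powr_add[of v0 "m - 1" 1] v0 by simp
    then have "k * D * v0 powr (m - 1) * v0 \<le> W.C^2 * v0" using ineq t(2) by (simp add: mult.assoc)
    then have I1: "k * D * v0 powr (m - 1) \<le> W.C^2" using v0 by simp
    have Ceq: "W.C = c * (1 + r * B)" unfolding W.C_def W.\<tau>_def by (simp add: algebra_simps)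
    have pos: "1 + r * B > 0" using r B by (simp add: add_pos_nonneg)
    have "W.C < \<mu>" using c pos unfolding Ceq cdot_def by (simp add: pos_less_divide_eq mult.commute)
    moreover have "W.C > 0" using W.Cpos .
    ultimately have "W.C^2 < \<mu>^2" by (simp add: power_strict_mono)
    then show False using I1 \<mu>2 by simp
  qed
  have lim: "((\<lambda>r. r * cdot r) \<longlongrightarrow> \<mu> / B) at_top"
  proof -
    have "((\<lambda>r. \<mu> / (inverse r + B)) \<longlongrightarrow> \<mu> / (0 + B)) at_top"
      by (intro tendsto_intros tendsto_inverse_0_at_top filterlim_ident) (use B in auto)
    moreover have "eventually (\<lambda>r. \<mu> / (inverse r + B) = r * cdot r) at_top"
      using eventually_gt_at_top[of 0]
    proof (rule eventually_mono)
      fix r :: real assume "r > 0"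
      then show "\<mu> / (inverse r + B) = r * cdot r" unfolding cdot_def
        by (simp add: field_simps)
    qed
    ultimately show ?thesis by (simp add: Lim_transform_eventually)
  qed
  have A: "\<forall>r\<ge>0. cdot r > 0 \<and> (\<forall>c. 0 < c \<and> c < cdot r \<longrightarrow> \<not> (\<exists>\<phi>. wave_solution m D b d \<kappa> c r \<phi>))"
  proof (rule allI, rule impI, rule conjI)
    fix r :: real assume r: "r \<ge> 0"
    show "cdot r > 0" unfolding cdot_def using \<mu> r B by (simp add: add_pos_nonneg)
    show "\<forall>c. 0 < c \<and> c < cdot r \<longrightarrow> \<not> (\<exists>\<phi>. wave_solution m D b d \<kappa> c r \<phi>)"
      using nowave r by blast
  qed
  have pos: "\<mu> / B > 0" using \<mu> B by simp
  show ?thesis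
    apply (rule exI[of _ "\<mu> / B"])
    apply (rule conjI[OF pos])
    apply (rule exI[of _ cdot])
    using A lim by blast
qed

end
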